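(* The Collatz conjecture (for every $n\in\mathbb{N}$ there exists $k\in\mathbb{N}_0$ with $T^{(k)}(n)=1$) holds if and only if every natural number $n\notin\{1,2,4\}$ can be represented in the form $n=\frac{2^m}{3^l}-\sum_{k=1}^{l}\frac{2^{b_k}}{3^k}$ for some $m,l,b_1,\dots,b_l\in\mathbb{N}_0$ with $0\leq l\leq m-3$ and $0\leq b_1<b_2<\cdots<b_l\leq m-4$.
   Context: $\mathbb{N}=\{1,2,3,\dots\}$, $\mathbb{N}_0=\mathbb{N}\cup\{0\}$. The Collatz map $T:\mathbb{N}\to\mathbb{N}$ is $T(n)=\frac{3n+1}{2}$ if $n$ is odd and $T(n)=\frac{n}{2}$ if $n$ is even; $T^{(k)}$ denotes the $k$-fold composition ($T^{(0)}$ the identity). For $l=0$ the sum is empty. *)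

theory Defs
  imports Complex_Main
begin

text \<open>The Collatz map T on the naturals (value at 0 is irrelevant; only n \<ge> 1 is used).\<close>
definition collatzT :: "nat \<Rightarrow> nat" where
  "collatzT n = (if odd n then (3 * n + 1) div 2 else n div 2)"

end

theory Submission
  imports Defs
begin

definition SS :: "nat \<Rightarrow> (nat \<Rightarrow> nat) \<Rightarrow> nat" where
  "SS l c = (\<Sum>k<l. 3^(l-1-k) * 2^(c k))"

lemma SS_shift2: "SS l (\<lambda>k. Suc (c k)) = 2 * SS l c"
  unfolding SS_def by (simp add: sum_distrib_left mult_ac)

lemma SS_Suc: "SS (Suc l) c = 3^l * 2^(c 0) + SS l (\<lambda>k. c (Suc k))"
  unfolding SS_def by (simp only: sum.lessThan_Suc_shift) simp

lemma funpow_front: "(f^^Suc m) x = (f^^m) (f x)"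
  by (simp only: funpow_Suc_right comp_apply)

lemma real_sum_shift:
  "(\<Sum>k=1..l. 2^(b k)/(3::real)^k) * 3^l = real (SS l (\<lambda>k. b (Suc k)))"
proof -
  have "(\<Sum>k=1..l. 2^(b k)/(3::real)^k) * 3^l = (\<Sum>k<l. 2^(b (Suc k))/(3::real)^(Suc k) * 3^l)"
    by (simp add: sum.atLeast1_atMost_eq sum_distrib_right)
  also have "\<dots> = (\<Sum>k<l. real (3^(l-1-k) * 2^(b (Suc k))))"
  proof (rule sum.cong)
    fix k assume "k \<in> {..<l}"
    then have l: "l = Suc k + (l-1-k)" by auto
    have "(3::real)^l = 3^(Suc k) * 3^(l-1-k)" by (subst l, subst power_add, simp)
    then show "2^(b (Suc k))/(3::real)^(Suc k) * 3^l = real (3^(l-1-k) * 2^(b (Suc k)))"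
      by simp
  qed simp
  finally show ?thesis unfolding SS_def by simp
qed

lemma collatz_back:
  "(\<forall>k. Suc k < l \<longrightarrow> c k < c (Suc k)) \<Longrightarrow> (\<forall>k<l. c k < m) \<Longrightarrow>
   3^l * n + SS l c = 2^m \<Longrightarrow> (collatzT^^m) n = 1"
proof (induction m arbitrary: l c n)
  case 0
  then have "l = 0" by (cases l) auto
  with 0 show ?case by (simp add: SS_def)
next
  case (Suc m)
  show ?case
  proof (cases l)
    case 0
    with Suc.prems have n: "n = 2 * 2^m" by (simp add: SS_def)
    then have "collatzT n = 2^m" unfolding collatzT_def by simp
    moreover have "(collatzT^^m) (2^m) = 1"
      using Suc.IH[of 0 c "2^m"] by (simp add: SS_def)
    ultimately show ?thesis by (simp del: funpow.simps add: funpow_front)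
  next
    case (Suc l')
    show ?thesis
    proof (cases "c 0 = 0")
      case False
      have pos: "\<forall>k<l. 0 < c k"
      proof (intro allI impI)
        fix k assume "k < l"
        show "0 < c k"
        proof (cases k)
          case 0 then show ?thesis using False by simp
        next
          case (Suc k') then show ?thesis using Suc.prems(1) \<open>k<l\<close> by (metis gr0I not_less0)
        qed
      qed
      define c' where "c' = (\<lambda>k. c k - 1)"
      have "SS l c = SS l (\<lambda>k. Suc (c' k))"
        unfolding SS_def c'_def using pos by (intro sum.cong) auto
      then have e: "SS l c = 2 * SS l c'" by (simp add: SS_shift2)
      have "even (3^l * n)"
      proof -
        have "even (2 ^ Suc m :: nat)" by simp
        then have "even (3^l*n + 2 * SS l c')" using Suc.prems(3) e by simp
        then show ?thesis by simp
      qed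
      then have ev: "even n" by simp
      then have Tn: "collatzT n = n div 2" unfolding collatzT_def by simp
      have "3^l * (n div 2) + SS l c' = 2^m" using Suc.prems(3) e ev by (auto elim!: evenE)
      moreover have "\<forall>k. Suc k < l \<longrightarrow> c' k < c' (Suc k)"
      proof (intro allI impI)
        fix k assume "Suc k < l"
        then have "c k < c (Suc k)" "0 < c k" using Suc.prems(1) pos by auto
        then show "c' k < c' (Suc k)" unfolding c'_def by arith
      qed
      moreover have "\<forall>k<l. c' k < m" using Suc.prems(2) pos unfolding c'_def by fastforce
      ultimately have "(collatzT^^m) (n div 2) = 1" using Suc.IH by blast
      then show ?thesis by (simp del: funpow.simps add: funpow_front Tn)
    next
      case True
      have pos: "\<forall>k<l'. 0 < c (Suc k)"
        using Suc.prems(1) \<open>l = Suc l'\<close> by (metis Suc_mono gr0I not_less0)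
      define c' where "c' = (\<lambda>k. c (Suc k) - 1)"
      have "SS l' (\<lambda>k. c (Suc k)) = SS l' (\<lambda>k. Suc (c' k))"
        unfolding SS_def c'_def using pos by (intro sum.cong) auto
      then have e: "SS l c = 3^l' + 2 * SS l' c'"
        using True \<open>l = Suc l'\<close> by (simp add: SS_shift2 SS_Suc)
      have eq: "3^l' * (3*n+1) + 2 * SS l' c' = 2 * 2^m"
        using Suc.prems(3) e \<open>l = Suc l'\<close> by (simp add: algebra_simps)
      have od: "odd n"
      proof
        assume "even n"
        have "even (3^l' * (3*n+1) + 2 * SS l' c')" by (simp only: eq) simp
        then have "even (3^l' * (3*n+1))" by simp
        then show False using \<open>even n\<close> by simp
      qed
      then have Tn: "3*n+1 = 2 * collatzT n" unfolding collatzT_def by (auto elim!: oddE)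
      have "2 * (3^l' * collatzT n + SS l' c') = 3^l' * (2 * collatzT n) + 2 * SS l' c'"
        by (simp add: algebra_simps)
      also have "\<dots> = 3^l' * (3*n+1) + 2*SS l' c'" by (simp only: Tn)
      also have "\<dots> = 2*2^m" by (rule eq)
      finally have "3^l' * collatzT n + SS l' c' = 2^m" by simp
      moreover have "\<forall>k. Suc k < l' \<longrightarrow> c' k < c' (Suc k)"
      proof (intro allI impI)
        fix k assume k: "Suc k < l'"
        then have "c (Suc k) < c (Suc (Suc k))" using Suc.prems(1) \<open>l = Suc l'\<close> by simp
        moreover have "0 < c (Suc k)" using pos k by simp
        ultimately show "c' k < c' (Suc k)" unfolding c'_def by arith
      qed
      moreover have "\<forall>k<l'. c' k < m"
      proof (intro allI impI)
        fix k assume k: "k < l'"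
        then have "c (Suc k) < Suc m" using Suc.prems(2) \<open>l = Suc l'\<close> by simp
        moreover have "0 < c (Suc k)" using pos k by simp
        ultimately show "c' k < m" unfolding c'_def by arith
      qed
      ultimately have "(collatzT^^m) (collatzT n) = 1" using Suc.IH by blast
      then show ?thesis by (simp del: funpow.simps add: funpow_front)
    qed
  qed
qed

lemma fwd:
  "\<exists>l c. l \<le> j \<and> (\<forall>k. Suc k < l \<longrightarrow> c k < c (Suc k)) \<and> (\<forall>k<l. c k < j) \<and>
     3^l * n + SS l c = 2^j * (collatzT^^j) n"
proof (induction j arbitrary: n)
  case 0
  show ?case by (rule exI[of _ 0]) (simp add: SS_def)
next
  case (Suc j)
  obtain l c where lc: "l \<le> j" "\<forall>k. Suc k < l \<longrightarrow> c k < c (Suc k)" "\<forall>k<l. c k < j"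
     "3^l * collatzT n + SS l c = 2^j * (collatzT^^j) (collatzT n)"
    using Suc.IH[of "collatzT n"] by blast
  have it: "(collatzT^^Suc j) n = (collatzT^^j) (collatzT n)" by (simp del: funpow.simps add: funpow_front)
  show ?case
  proof (cases "even n")
    case True
    then have "n = 2 * collatzT n" unfolding collatzT_def by auto
    then have "3^l * n + SS l (\<lambda>k. Suc (c k)) = 2 * (3^l * collatzT n + SS l c)"
      by (simp add: SS_shift2 algebra_simps)
    also have "\<dots> = 2 * (2^j * (collatzT^^j) (collatzT n))" by (simp only: lc(4))
    also have "\<dots> = 2^Suc j * (collatzT^^Suc j) n" by (simp only: it) simp
    finally have "3^l * n + SS l (\<lambda>k. Suc (c k)) = 2^Suc j * (collatzT^^Suc j) n" .
    moreover have "\<forall>k. Suc k < l \<longrightarrow> Suc (c k) < Suc (c (Suc k))" using lc(2) by simp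
    moreover have "\<forall>k<l. Suc (c k) < Suc j" using lc(3) by simp
    ultimately show ?thesis using lc(1) by (intro exI[of _ l] exI[of _ "\<lambda>k. Suc (c k)"]) auto
  next
    case False
    then have Tn: "3*n+1 = 2 * collatzT n" unfolding collatzT_def by (auto elim!: oddE)
    define c' where "c' = (\<lambda>k. case k of 0 \<Rightarrow> 0 | Suc k \<Rightarrow> Suc (c k))"
    have "SS (Suc l) c' = 3^l + 2 * SS l c"
      by (simp add: SS_Suc c'_def SS_shift2)
    then have "3^Suc l * n + SS (Suc l) c' = 2^Suc j * (collatzT^^Suc j) n"
    proof -
      assume h: "SS (Suc l) c' = 3^l + 2 * SS l c"
      have "3^Suc l * n + SS (Suc l) c' = 3^l * (3*n+1) + 2 * SS l c"
        using h by (simp add: algebra_simps)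
      also have "\<dots> = 2 * (3^l * collatzT n + SS l c)" using Tn by (simp add: algebra_simps)
      also have "\<dots> = 2 * (2^j * (collatzT^^j) (collatzT n))" by (simp only: lc(4))
      also have "\<dots> = 2^Suc j * (collatzT^^Suc j) n" by (simp only: it) simp
      finally show ?thesis .
    qed
    moreover have "\<forall>k. Suc k < Suc l \<longrightarrow> c' k < c' (Suc k)"
    proof (intro allI impI)
      fix k assume "Suc k < Suc l"
      then show "c' k < c' (Suc k)" using lc(2) by (cases k) (auto simp: c'_def)
    qed
    moreover have "\<forall>k<Suc l. c' k < Suc j"
    proof (intro allI impI)
      fix k assume "k < Suc l"
      then show "c' k < Suc j" using lc(3) by (cases k) (auto simp: c'_def)
    qed
    ultimately show ?thesis using lc(1) by (intro exI[of _ "Suc l"] exI[of _ c']) auto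
  qed
qed

lemma T1: "collatzT y = 1 \<longleftrightarrow> y = 2" unfolding collatzT_def by presburger
lemma T2: "collatzT y = 2 \<longleftrightarrow> y = 1 \<or> y = 4" unfolding collatzT_def by presburger
lemma T4: "collatzT y = 4 \<longleftrightarrow> y = 8" unfolding collatzT_def by presburger

theorem mainTheorem4:
  shows "(\<forall>n::nat. n \<ge> 1 \<longrightarrow> (\<exists>k::nat. (collatzT ^^ k) n = 1)) \<longleftrightarrow>
    (\<forall>n::nat. n \<ge> 1 \<and> n \<notin> {1, 2, 4} \<longrightarrow>
      (\<exists>(m::nat) (l::nat) (b::nat \<Rightarrow> nat).
         l + 3 \<le> m \<and>
         (\<forall>k\<in>{1..<l}. b k < b (Suc k)) \<and>
         (\<forall>k\<in>{1..l}. b k + 4 \<le> m) \<and>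
         real n = 2 ^ m / 3 ^ l - (\<Sum>k=1..l. 2 ^ (b k) / 3 ^ k)))"
proof
  assume H: "\<forall>n::nat. n \<ge> 1 \<longrightarrow> (\<exists>k::nat. (collatzT ^^ k) n = 1)"
  show "\<forall>n::nat. n \<ge> 1 \<and> n \<notin> {1, 2, 4} \<longrightarrow>
      (\<exists>(m::nat) (l::nat) (b::nat \<Rightarrow> nat).
         l + 3 \<le> m \<and>
         (\<forall>k\<in>{1..<l}. b k < b (Suc k)) \<and>
         (\<forall>k\<in>{1..l}. b k + 4 \<le> m) \<and>
         real n = 2 ^ m / 3 ^ l - (\<Sum>k=1..l. 2 ^ (b k) / 3 ^ k))"
  proof (intro allI impI)
    fix n :: nat assume n: "n \<ge> 1 \<and> n \<notin> {1, 2, 4}"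
    define x where "x = (\<lambda>i. (collatzT^^i) n)"
    have ex: "\<exists>k. x k = 1" using H n unfolding x_def by blast
    define K where "K = (LEAST k. x k = 1)"
    have xK: "x K = 1" unfolding K_def using ex by (rule LeastI_ex)
    have minK: "\<And>i. i < K \<Longrightarrow> x i \<noteq> 1" unfolding K_def using not_less_Least by blast
    have xs: "\<And>i. x (Suc i) = collatzT (x i)" unfolding x_def by simp
    have x0: "x 0 = n" unfolding x_def by simp
    have "K \<noteq> 0"
    proof
      assume "K = 0" then show False using xK x0 n by simp
    qed
    then obtain K1 where K1: "K = Suc K1" by (cases K) auto
    have a1: "x K1 = 2" using xK K1 xs T1 by metis
    have "K1 \<noteq> 0"
    proof
      assume "K1 = 0" then show False using a1 x0 n by simp
    qed
    then obtain K2 where K2: "K1 = Suc K2" by (cases K1) auto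
    have "x K2 = 1 \<or> x K2 = 4" using a1 K2 xs T2 by metis
    moreover have "x K2 \<noteq> 1" using minK K1 K2 by simp
    ultimately have a2: "x K2 = 4" by simp
    have "K2 \<noteq> 0"
    proof
      assume "K2 = 0" then show False using a2 x0 n by simp
    qed
    then obtain K3 where K3: "K2 = Suc K3" by (cases K2) auto
    have a3: "x K3 = 8" using a2 K3 xs T4 by metis
    obtain l c where lc: "l \<le> K3" "\<forall>k. Suc k < l \<longrightarrow> c k < c (Suc k)" "\<forall>k<l. c k < K3"
     "3^l * n + SS l c = 2^K3 * (collatzT^^K3) n" using fwd by blast
    have eqn: "3^l * n + SS l c = 2^K" using lc(4) a3 K1 K2 K3 unfolding x_def by simp
    define b where "b = (\<lambda>k. c (k - 1))"
    have bc: "(\<lambda>k. b (Suc k)) = c" unfolding b_def by simp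
    have "real (3^l * n + SS l c) = 2^K" using eqn by (metis of_nat_numeral of_nat_power)
    then have "real n * 3^l = 2^K - real (SS l c)" by (simp add: mult.commute eq_diff_eq)
    also have "real (SS l c) = (\<Sum>k=1..l. 2^(b k)/(3::real)^k) * 3^l"
      using real_sum_shift[of b l] bc by simp
    finally have "real n = 2 ^ K / 3 ^ l - (\<Sum>k=1..l. 2 ^ (b k) / 3 ^ k)"
      by (simp add: field_simps)
    moreover have "l + 3 \<le> K" using lc(1) K1 K2 K3 by simp
    moreover have "\<forall>k\<in>{1..<l}. b k < b (Suc k)"
      using lc(2) unfolding b_def by (metis Suc_diff_1 atLeastLessThan_iff diff_Suc_1 less_eq_Suc_le Suc_le_lessD zero_less_iff_neq_zero le_numeral_extra(2) not_less_eq_eq)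
    moreover have "\<forall>k\<in>{1..l}. b k + 4 \<le> K"
    proof
      fix k assume "k \<in> {1..l}"
      then have "k - 1 < l" by auto
      then have "c (k-1) < K3" using lc(3) by blast
      then show "b k + 4 \<le> K" using K1 K2 K3 unfolding b_def by simp
    qed
    ultimately show "\<exists>(m::nat) (l::nat) (b::nat \<Rightarrow> nat).
         l + 3 \<le> m \<and>
         (\<forall>k\<in>{1..<l}. b k < b (Suc k)) \<and>
         (\<forall>k\<in>{1..l}. b k + 4 \<le> m) \<and>
         real n = 2 ^ m / 3 ^ l - (\<Sum>k=1..l. 2 ^ (b k) / 3 ^ k)" by blast
  qed
next
  assume H: "\<forall>n::nat. n \<ge> 1 \<and> n \<notin> {1, 2, 4} \<longrightarrow>
      (\<exists>(m::nat) (l::nat) (b::nat \<Rightarrow> nat).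
         l + 3 \<le> m \<and>
         (\<forall>k\<in>{1..<l}. b k < b (Suc k)) \<and>
         (\<forall>k\<in>{1..l}. b k + 4 \<le> m) \<and>
         real n = 2 ^ m / 3 ^ l - (\<Sum>k=1..l. 2 ^ (b k) / 3 ^ k))"
  show "\<forall>n::nat. n \<ge> 1 \<longrightarrow> (\<exists>k::nat. (collatzT ^^ k) n = 1)"
  proof (intro allI impI)
    fix n :: nat assume n1: "n \<ge> 1"
    show "\<exists>k. (collatzT ^^ k) n = 1"
    proof (cases "n \<in> {1,2,4}")
      case True
      then have "n = 1 \<or> n = 2 \<or> n = 4" by simp
      moreover have "collatzT 4 = 2" by (simp add: collatzT_def)
      moreover have "collatzT 2 = 1" by (simp add: collatzT_def)
      ultimately have "(collatzT ^^ 0) n = 1 \<or> (collatzT ^^ Suc 0) n = 1 \<or> (collatzT ^^ Suc (Suc 0)) n = 1"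
        by auto
      then show ?thesis by blast
    next
      case False
      then obtain m l b where mlb: "l + 3 \<le> m" "\<forall>k\<in>{1..<l}. b k < b (Suc k)"
        "\<forall>k\<in>{1..l}. b k + 4 \<le> m"
        "real n = 2 ^ m / 3 ^ l - (\<Sum>k=1..l. 2 ^ (b k) / 3 ^ k)" using H n1 by blast
      define c where "c = (\<lambda>k. b (Suc k))"
      have "real n * 3^l = 2^m - (\<Sum>k=1..l. 2 ^ (b k) / 3 ^ k) * 3^l"
        using mlb(4) by (simp add: field_simps)
      then have "real n * 3^l = 2^m - real (SS l c)" using real_sum_shift[of b l] c_def by simp
      then have "real (3^l * n + SS l c) = real (2^m)" by (simp add: mult.commute eq_diff_eq)
      then have eq: "3^l * n + SS l c = 2^m" by (rule of_nat_eq_iff[THEN iffD1])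
      have "\<forall>k. Suc k < l \<longrightarrow> c k < c (Suc k)" using mlb(2) unfolding c_def by simp
      moreover have "\<forall>k<l. c k < m"
      proof (intro allI impI)
        fix k assume "k < l"
        then have "Suc k \<in> {1..l}" by simp
        then have "b (Suc k) + 4 \<le> m" using mlb(3) by blast
        then show "c k < m" unfolding c_def by simp
      qed
      ultimately show ?thesis using collatz_back eq by blast
    qed
  qed
qed

end
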